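(* Let $G = [V_1]H_1 \times \dots \times [V_n]H_n$ be a direct product of type 1 primitive groups $[V_i]H_i$ such that $|H_i| > |V_i|$ for each $i$. Then $G$ has Property A.
   Context: All groups are finite. A type 1 primitive group is a semidirect product $[V]H$ where $V$ is a non-trivial finite vector space over a field of prime order (an elementary abelian group) and $H$ is a subgroup of $\mathrm{Aut}(V)$ acting irreducibly on $V$, with the natural action. A group $G$ has Property A if for every non-trivial abelian normal subgroup $A$ of $G$, $|G/C_G(A)| > |A|$. *)

theory Defs
  imports "HOL-Algebra.Algebra"
begin

text \<open>A finite elementary abelian p-group, i.e. a non-trivial finite vector space over the
  prime field F_p, viewed as an additive (here: multiplicatively written) group.\<close>
definition elementary_abelian :: "('a, 'b) monoid_scheme \<Rightarrow> bool" where
  "elementary_abelian V \<longleftrightarrow> comm_group V \<and> finite (carrier V) \<and> carrier V \<noteq> {\<one>\<^bsub>V\<^esub>} \<and>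
     (\<exists>p::nat. Factorial_Ring.prime p \<and> (\<forall>x\<in>carrier V. x [^]\<^bsub>V\<^esub> p = \<one>\<^bsub>V\<^esub>))"

text \<open>H (a subgroup of Aut(V), given by its set of automorphisms) acts irreducibly on V:
  the only H-invariant subgroups (= F_p-subspaces) are trivial and V.\<close>
definition acts_irreducibly :: "('a, 'b) monoid_scheme \<Rightarrow> ('a \<Rightarrow> 'a) set \<Rightarrow> bool" where
  "acts_irreducibly V H \<longleftrightarrow>
     (\<forall>W. subgroup W V \<and> (\<forall>h\<in>H. h ` W \<subseteq> W) \<longrightarrow> W = {\<one>\<^bsub>V\<^esub>} \<or> W = carrier V)"

definition semidirect :: "('a, 'b) monoid_scheme \<Rightarrow> ('a \<Rightarrow> 'a) set \<Rightarrow> ('a \<times> ('a \<Rightarrow> 'a)) monoid" where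
  "semidirect V H = \<lparr>carrier = carrier V \<times> H,
     monoid.mult = (\<lambda>(v, h) (w, k). (v \<otimes>\<^bsub>V\<^esub> h w, compose (carrier V) h k)),
     one = (\<one>\<^bsub>V\<^esub>, restrict id (carrier V))\<rparr>"

definition type1_primitive_data :: "('a, 'b) monoid_scheme \<Rightarrow> ('a \<Rightarrow> 'a) set \<Rightarrow> bool" where
  "type1_primitive_data V H \<longleftrightarrow> elementary_abelian V \<and> subgroup H (AutoGroup V) \<and>
     acts_irreducibly V H"

definition centralizer :: "('a, 'b) monoid_scheme \<Rightarrow> 'a set \<Rightarrow> 'a set" where
  "centralizer G A = {g \<in> carrier G. \<forall>a\<in>A. g \<otimes>\<^bsub>G\<^esub> a = a \<otimes>\<^bsub>G\<^esub> g}"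

definition property_A :: "('a, 'b) monoid_scheme \<Rightarrow> bool" where
  "property_A G \<longleftrightarrow> (\<forall>A. A \<lhd> G \<and> (\<forall>x\<in>A. \<forall>y\<in>A. x \<otimes>\<^bsub>G\<^esub> y = y \<otimes>\<^bsub>G\<^esub> x) \<and> A \<noteq> {\<one>\<^bsub>G\<^esub>}
       \<longrightarrow> order (G Mod centralizer G A) > card A)"

end

theory Submission
  imports Defs
begin

locale t1 =
  fixes V :: "('a,'b) monoid_scheme" and H :: "('a \<Rightarrow> 'a) set"
  assumes prim: "type1_primitive_data V H"
begin

lemma cg: "comm_group V" using prim by (simp add: type1_primitive_data_def elementary_abelian_def)
lemma finV: "finite (carrier V)" using prim by (simp add: type1_primitive_data_def elementary_abelian_def)
lemma subH: "subgroup H (AutoGroup V)" using prim by (simp add: type1_primitive_data_def)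
lemma irr: "acts_irreducibly V H" using prim by (simp add: type1_primitive_data_def)

sublocale V: comm_group V by (rule cg)

lemma AG: "group (AutoGroup V)" by (rule V.AutoGroup)
sublocale A: group "AutoGroup V" by (rule AG)

lemma carrA: "carrier (AutoGroup V) = auto V" by (simp add: AutoGroup_def)
lemma HA: "H \<subseteq> auto V" using subH subgroup.subset carrA by blast

lemma multA: "h \<in> auto V \<Longrightarrow> k \<in> auto V \<Longrightarrow> h \<otimes>\<^bsub>AutoGroup V\<^esub> k = compose (carrier V) h k"
  by (simp add: AutoGroup_def BijGroup_def auto_def)
lemma oneA: "\<one>\<^bsub>AutoGroup V\<^esub> = (\<lambda>x\<in>carrier V. x)"
  by (simp add: AutoGroup_def BijGroup_def)

lemma autoD:
  assumes "h \<in> auto V"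
  shows "h \<in> hom V V" "h \<in> extensional (carrier V)" "bij_betw h (carrier V) (carrier V)"
  using assms unfolding auto_def Bij_def by simp_all

lemma H_hom: "h \<in> H \<Longrightarrow> x \<in> carrier V \<Longrightarrow> y \<in> carrier V \<Longrightarrow> h (x \<otimes>\<^bsub>V\<^esub> y) = h x \<otimes>\<^bsub>V\<^esub> h y"
  by (rule hom_mult[OF autoD(1)[OF subsetD[OF HA]]])
lemma H_car: assumes "h \<in> H" "x \<in> carrier V" shows "h x \<in> carrier V"
proof -
  have "h \<in> hom V V" using autoD(1) HA assms(1) by blast
  then show ?thesis using assms(2) unfolding hom_def by (blast intro: funcset_mem)
qed
lemma H_ext: "h \<in> H \<Longrightarrow> h \<in> extensional (carrier V)"
  by (rule autoD(2)[OF subsetD[OF HA]])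
lemma H_one: "h \<in> H \<Longrightarrow> h \<one>\<^bsub>V\<^esub> = \<one>\<^bsub>V\<^esub>"
  by (rule hom_one[OF autoD(1)[OF subsetD[OF HA]] V.is_group V.is_group])

lemma H_mult: "h \<in> H \<Longrightarrow> k \<in> H \<Longrightarrow> compose (carrier V) h k \<in> H"
  using subH HA multA subgroup.m_closed by (metis subsetD)
lemma H_id: "(\<lambda>x\<in>carrier V. x) \<in> H"
  using subH oneA subgroup.one_closed by metis
lemma H_inv: "h \<in> H \<Longrightarrow> inv\<^bsub>AutoGroup V\<^esub> h \<in> H"
  using subH subgroup.m_inv_closed by metis
lemma H_linv: "h \<in> H \<Longrightarrow> compose (carrier V) (inv\<^bsub>AutoGroup V\<^esub> h) h = (\<lambda>x\<in>carrier V. x)"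
  by (metis H_inv HA A.l_inv carrA multA oneA subsetD)
lemma H_rinv: "h \<in> H \<Longrightarrow> compose (carrier V) h (inv\<^bsub>AutoGroup V\<^esub> h) = (\<lambda>x\<in>carrier V. x)"
  by (metis H_inv HA A.r_inv carrA multA oneA subsetD)

lemma H_fix: "h \<in> H \<Longrightarrow> (\<And>w. w \<in> carrier V \<Longrightarrow> h w = w) \<Longrightarrow> h = (\<lambda>x\<in>carrier V. x)"
  using H_ext by (force simp: extensional_def)

abbreviation "S \<equiv> semidirect V H"
abbreviation "I \<equiv> (\<lambda>x\<in>carrier V. x)"

lemma carrS: "carrier S = carrier V \<times> H" by (simp add: semidirect_def)
lemma multS: "(v,h) \<otimes>\<^bsub>S\<^esub> (w,k) = (v \<otimes>\<^bsub>V\<^esub> h w, compose (carrier V) h k)"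
  by (simp add: semidirect_def)
lemma oneS: "\<one>\<^bsub>S\<^esub> = (\<one>\<^bsub>V\<^esub>, I)" by (simp add: semidirect_def id_def)

lemma grpS: "group S"
proof (rule groupI)
  fix x y assume "x \<in> carrier S" "y \<in> carrier S"
  then show "x \<otimes>\<^bsub>S\<^esub> y \<in> carrier S"
    by (auto simp: carrS multS H_car H_mult)
next
  show "\<one>\<^bsub>S\<^esub> \<in> carrier S" by (simp add: carrS oneS H_id)
next
  fix x y z assume "x \<in> carrier S" "y \<in> carrier S" "z \<in> carrier S"
  then obtain u h v k w l where xyz: "x = (u,h)" "y = (v,k)" "z = (w,l)" and
    m: "u \<in> carrier V" "v \<in> carrier V" "w \<in> carrier V" "h \<in> H" "k \<in> H" "l \<in> H"
    by (auto simp: carrS)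
  have "k \<in> carrier V \<rightarrow> carrier V" "l \<in> carrier V \<rightarrow> carrier V" "h \<in> carrier V \<rightarrow> carrier V"
    using m H_car by auto
  then have c: "compose (carrier V) (compose (carrier V) h k) l = compose (carrier V) h (compose (carrier V) k l)"
    by (simp add: compose_assoc)
  have e1: "h (v \<otimes>\<^bsub>V\<^esub> k w) = h v \<otimes>\<^bsub>V\<^esub> h (k w)" using m H_hom H_car by simp
  have e2: "compose (carrier V) h k w = h (k w)" using m by (simp add: compose_eq)
  show "x \<otimes>\<^bsub>S\<^esub> y \<otimes>\<^bsub>S\<^esub> z = x \<otimes>\<^bsub>S\<^esub> (y \<otimes>\<^bsub>S\<^esub> z)"
    using m by (simp add: xyz multS c e1 e2 H_car V.m_assoc)
next
  fix x assume "x \<in> carrier S"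
  then obtain v h where x: "x = (v,h)" "v \<in> carrier V" "h \<in> H" by (auto simp: carrS)
  have "h \<in> carrier V \<rightarrow> carrier V" using x H_car by auto
  then show "\<one>\<^bsub>S\<^esub> \<otimes>\<^bsub>S\<^esub> x = x" using x
    by (simp add: oneS multS Id_compose H_ext)
next
  fix x assume "x \<in> carrier S"
  then obtain v h where x: "x = (v,h)" "v \<in> carrier V" "h \<in> H" by (auto simp: carrS)
  define k where "k = inv\<^bsub>AutoGroup V\<^esub> h"
  have k: "k \<in> H" using H_inv x k_def by simp
  have "(k (inv\<^bsub>V\<^esub> v), k) \<otimes>\<^bsub>S\<^esub> x = \<one>\<^bsub>S\<^esub>"
  proof -
    have "k (inv\<^bsub>V\<^esub> v) \<otimes>\<^bsub>V\<^esub> k v = \<one>\<^bsub>V\<^esub>"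
      using x k H_hom[of k "inv\<^bsub>V\<^esub> v" v] H_one[of k] by simp
    then show ?thesis using x by (simp add: multS oneS k_def H_linv)
  qed
  moreover have "(k (inv\<^bsub>V\<^esub> v), k) \<in> carrier S" using x k by (simp add: carrS H_car)
  ultimately show "\<exists>y\<in>carrier S. y \<otimes>\<^bsub>S\<^esub> x = \<one>\<^bsub>S\<^esub>" by blast
qed


sublocale S: group S by (rule grpS)

lemma invS: assumes "v \<in> carrier V" "h \<in> H"
  shows "inv\<^bsub>S\<^esub> (v,h) = ((inv\<^bsub>AutoGroup V\<^esub> h) (inv\<^bsub>V\<^esub> v), inv\<^bsub>AutoGroup V\<^esub> h)"
proof (rule S.inv_equality)
  define k where "k = inv\<^bsub>AutoGroup V\<^esub> h"
  have k: "k \<in> H" using H_inv assms k_def by simp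
  have "k (inv\<^bsub>V\<^esub> v) \<otimes>\<^bsub>V\<^esub> k v = \<one>\<^bsub>V\<^esub>"
    using assms k H_hom[of k "inv\<^bsub>V\<^esub> v" v] H_one[of k] by simp
  then show "((inv\<^bsub>AutoGroup V\<^esub> h) (inv\<^bsub>V\<^esub> v), inv\<^bsub>AutoGroup V\<^esub> h) \<otimes>\<^bsub>S\<^esub> (v, h) = \<one>\<^bsub>S\<^esub>"
    using assms by (simp add: multS oneS k_def H_linv)
  show "(v, h) \<in> carrier S" using assms by (simp add: carrS)
  show "((inv\<^bsub>AutoGroup V\<^esub> h) (inv\<^bsub>V\<^esub> v), inv\<^bsub>AutoGroup V\<^esub> h) \<in> carrier S"
    using assms k k_def by (simp add: carrS H_car)
qed

lemma invA_I: "inv\<^bsub>AutoGroup V\<^esub> I = I"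
  using A.inv_one oneA by metis

lemma invS_I: "v \<in> carrier V \<Longrightarrow> inv\<^bsub>S\<^esub> (v, I) = (inv\<^bsub>V\<^esub> v, I)"
  using invS[OF _ H_id] invA_I by simp

lemma I_ap: "v \<in> carrier V \<Longrightarrow> I v = v" by simp

lemma compI: "h \<in> H \<Longrightarrow> compose (carrier V) I h = h"
  by (rule Id_compose) (auto intro: H_car H_ext)
lemma compI2: "h \<in> H \<Longrightarrow> compose (carrier V) h I = h"
  by (rule compose_Id) (auto intro: H_car H_ext)

lemma M_cases:
  assumes nN: "N \<lhd> S"
  shows "{w \<in> carrier V. (w, I) \<in> N} = {\<one>\<^bsub>V\<^esub>} \<or> {w \<in> carrier V. (w, I) \<in> N} = carrier V"
proof -
  interpret N: normal N S by (rule nN)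
  let ?M = "{w \<in> carrier V. (w, I) \<in> N}"
  have "subgroup ?M V"
  proof
    show "?M \<subseteq> carrier V" by blast
    fix x y assume "x \<in> ?M" "y \<in> ?M"
    then have "(x, I) \<otimes>\<^bsub>S\<^esub> (y, I) \<in> N" by (simp add: N.m_closed)
    then show "x \<otimes>\<^bsub>V\<^esub> y \<in> ?M" using \<open>x \<in> ?M\<close> \<open>y \<in> ?M\<close>
      by (simp add: multS compI H_id)
  next
    show "\<one>\<^bsub>V\<^esub> \<in> ?M" using N.one_closed by (simp add: oneS)
  next
    fix x assume "x \<in> ?M"
    then have "inv\<^bsub>S\<^esub> (x, I) \<in> N" by (simp add: N.m_inv_closed)
    then show "inv\<^bsub>V\<^esub> x \<in> ?M" using \<open>x \<in> ?M\<close> by (simp add: invS_I)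
  qed
  moreover have "\<forall>h\<in>H. h ` ?M \<subseteq> ?M"
  proof (intro ballI subsetI)
    fix h y assume h: "h \<in> H" and "y \<in> h ` ?M"
    then obtain w where w: "w \<in> carrier V" "(w, I) \<in> N" "y = h w" by blast
    have "(\<one>\<^bsub>V\<^esub>, h) \<otimes>\<^bsub>S\<^esub> (w, I) \<otimes>\<^bsub>S\<^esub> inv\<^bsub>S\<^esub> (\<one>\<^bsub>V\<^esub>, h) \<in> N"
      using h w by (intro N.inv_op_closed2) (simp_all add: carrS)
    moreover have "compose (carrier V) h (inv\<^bsub>AutoGroup V\<^esub> h) = I" using H_rinv h by blast
    ultimately have "(h w, I) \<in> N"
      using h w H_inv[OF h] by (simp add: invS multS compI2 H_one H_car)
    then show "y \<in> ?M" using w h H_car by simp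
  qed
  ultimately show ?thesis using irr unfolding acts_irreducibly_def by blast
qed


lemma N_sub:
  assumes nN: "N \<lhd> S" and ab: "\<forall>x\<in>N. \<forall>y\<in>N. x \<otimes>\<^bsub>S\<^esub> y = y \<otimes>\<^bsub>S\<^esub> x"
    and g: "(v, h) \<in> N"
  shows "h = I"
proof -
  interpret N: normal N S by (rule nN)
  have vh: "v \<in> carrier V" "h \<in> H" using N.subset g by (auto simp: carrS)
  have hf: "h \<in> carrier V \<rightarrow> carrier V" using vh H_car by auto
  from M_cases[OF nN] consider "{w \<in> carrier V. (w, I) \<in> N} = carrier V"
    | "{w \<in> carrier V. (w, I) \<in> N} = {\<one>\<^bsub>V\<^esub>}" by blast
  then show ?thesis
  proof cases
    case 1
    show ?thesis
    proof (rule H_fix[OF vh(2)])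
      fix w assume w: "w \<in> carrier V"
      then have "(w, I) \<in> N" using 1 by blast
      then have "(v, h) \<otimes>\<^bsub>S\<^esub> (w, I) = (w, I) \<otimes>\<^bsub>S\<^esub> (v, h)" using ab g by blast
      then have "v \<otimes>\<^bsub>V\<^esub> h w = w \<otimes>\<^bsub>V\<^esub> v" using w vh by (simp add: multS)
      also have "\<dots> = v \<otimes>\<^bsub>V\<^esub> w" using w vh V.m_comm by blast
      finally show "h w = w" using w vh H_car V.l_cancel by blast
    qed
  next
    case 2
    define k where "k = inv\<^bsub>AutoGroup V\<^esub> h"
    have k: "k \<in> H" using H_inv vh k_def by simp
    have hk: "\<And>y. y \<in> carrier V \<Longrightarrow> h (k y) = y"
    proof -
      fix y assume y: "y \<in> carrier V"
      have "compose (carrier V) h k y = I y" using H_rinv vh k_def by simp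
      then show "h (k y) = y" using y by (simp add: compose_eq)
    qed
    have key: "h (inv\<^bsub>V\<^esub> w) = inv\<^bsub>V\<^esub> w" if w: "w \<in> carrier V" for w
    proof -
      let ?x = "(w, I)" and ?g = "(v, h)"
      have xc: "?x \<in> carrier S" using w H_id by (simp add: carrS)
      have "?x \<otimes>\<^bsub>S\<^esub> ?g \<otimes>\<^bsub>S\<^esub> inv\<^bsub>S\<^esub> ?x \<in> N" using xc g by (rule N.inv_op_closed2)
      moreover have "inv\<^bsub>S\<^esub> ?g \<in> N" using g by (rule N.m_inv_closed)
      ultimately have "?x \<otimes>\<^bsub>S\<^esub> ?g \<otimes>\<^bsub>S\<^esub> inv\<^bsub>S\<^esub> ?x \<otimes>\<^bsub>S\<^esub> inv\<^bsub>S\<^esub> ?g \<in> N" by (rule N.m_closed)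
      moreover have "?x \<otimes>\<^bsub>S\<^esub> ?g \<otimes>\<^bsub>S\<^esub> inv\<^bsub>S\<^esub> ?x \<otimes>\<^bsub>S\<^esub> inv\<^bsub>S\<^esub> ?g
          = (w \<otimes>\<^bsub>V\<^esub> v \<otimes>\<^bsub>V\<^esub> h (inv\<^bsub>V\<^esub> w) \<otimes>\<^bsub>V\<^esub> inv\<^bsub>V\<^esub> v, I)"
        using w vh k H_car hk
        by (simp add: invS_I invS[OF vh] flip: k_def) (simp add: multS compI compI2 k_def H_rinv)
      moreover have "w \<otimes>\<^bsub>V\<^esub> v \<otimes>\<^bsub>V\<^esub> h (inv\<^bsub>V\<^esub> w) \<otimes>\<^bsub>V\<^esub> inv\<^bsub>V\<^esub> v = w \<otimes>\<^bsub>V\<^esub> h (inv\<^bsub>V\<^esub> w)"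
      proof -
        have a: "h (inv\<^bsub>V\<^esub> w) \<in> carrier V" using w vh H_car by simp
        have "w \<otimes>\<^bsub>V\<^esub> v \<otimes>\<^bsub>V\<^esub> h (inv\<^bsub>V\<^esub> w) \<otimes>\<^bsub>V\<^esub> inv\<^bsub>V\<^esub> v
            = w \<otimes>\<^bsub>V\<^esub> (v \<otimes>\<^bsub>V\<^esub> (h (inv\<^bsub>V\<^esub> w) \<otimes>\<^bsub>V\<^esub> inv\<^bsub>V\<^esub> v))"
          using a w vh by (simp add: V.m_assoc)
        also have "\<dots> = w \<otimes>\<^bsub>V\<^esub> (v \<otimes>\<^bsub>V\<^esub> (inv\<^bsub>V\<^esub> v \<otimes>\<^bsub>V\<^esub> h (inv\<^bsub>V\<^esub> w)))"
          using a w vh V.m_comm[of "h (inv\<^bsub>V\<^esub> w)" "inv\<^bsub>V\<^esub> v"] by simp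
        also have "\<dots> = w \<otimes>\<^bsub>V\<^esub> h (inv\<^bsub>V\<^esub> w)"
          using a w vh by (simp flip: V.m_assoc)
        finally show ?thesis .
      qed
      ultimately have "w \<otimes>\<^bsub>V\<^esub> h (inv\<^bsub>V\<^esub> w) \<in> {w \<in> carrier V. (w, I) \<in> N}"
        using w vh H_car by simp
      then have "w \<otimes>\<^bsub>V\<^esub> h (inv\<^bsub>V\<^esub> w) = \<one>\<^bsub>V\<^esub>" using 2 by blast
      then have "h (inv\<^bsub>V\<^esub> w) \<otimes>\<^bsub>V\<^esub> w = \<one>\<^bsub>V\<^esub>" using w vh H_car V.m_comm[of w "h (inv\<^bsub>V\<^esub> w)"] by simp
      then show ?thesis using w vh H_car V.inv_equality[of "h (inv\<^bsub>V\<^esub> w)" w] by simp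
    qed
    show ?thesis
    proof (rule H_fix[OF vh(2)])
      fix w assume w: "w \<in> carrier V"
      show "h w = w" using key[of "inv\<^bsub>V\<^esub> w"] w by simp
    qed
  qed
qed

lemma C_sub:
  assumes nN: "N \<lhd> S" and ab: "\<forall>x\<in>N. \<forall>y\<in>N. x \<otimes>\<^bsub>S\<^esub> y = y \<otimes>\<^bsub>S\<^esub> x"
    and nt: "N \<noteq> {\<one>\<^bsub>S\<^esub>}"
  shows "centralizer S N \<subseteq> carrier V \<times> {I}"
proof -
  interpret N: normal N S by (rule nN)
  obtain g where g: "g \<in> N" "g \<noteq> \<one>\<^bsub>S\<^esub>" using nt N.one_closed by blast
  then obtain v h where vh: "g = (v, h)" by (cases g)
  have "h = I" using N_sub[OF nN ab] g vh by blast
  then have v: "v \<in> carrier V" "v \<noteq> \<one>\<^bsub>V\<^esub>" "(v, I) \<in> N" using g vh N.subset by (auto simp: carrS oneS)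
  then have Mall: "{w \<in> carrier V. (w, I) \<in> N} = carrier V" using M_cases[OF nN] by blast
  show ?thesis
  proof
    fix c assume c: "c \<in> centralizer S N"
    then obtain w k where wk: "c = (w, k)" "w \<in> carrier V" "k \<in> H"
      by (cases c) (auto simp: centralizer_def carrS)
    have "k = I"
    proof (rule H_fix[OF wk(3)])
      fix u assume u: "u \<in> carrier V"
      then have "(u, I) \<in> N" using Mall by blast
      then have "(w, k) \<otimes>\<^bsub>S\<^esub> (u, I) = (u, I) \<otimes>\<^bsub>S\<^esub> (w, k)" using c wk by (auto simp: centralizer_def)
      then have "w \<otimes>\<^bsub>V\<^esub> k u = u \<otimes>\<^bsub>V\<^esub> w" using u wk by (simp add: multS)
      also have "\<dots> = w \<otimes>\<^bsub>V\<^esub> u" using u wk V.m_comm by blast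
      finally show "k u = u" using u wk H_car V.l_cancel by blast
    qed
    then show "c \<in> carrier V \<times> {I}" using wk by simp
  qed
qed

lemma factor:
  assumes nN: "N \<lhd> S" and ab: "\<forall>x\<in>N. \<forall>y\<in>N. x \<otimes>\<^bsub>S\<^esub> y = y \<otimes>\<^bsub>S\<^esub> x"
    and cardH: "card (carrier V) < card H"
  shows "N \<noteq> {\<one>\<^bsub>S\<^esub>} \<Longrightarrow> card (centralizer S N) * card N < card (carrier S)"
    and "card (centralizer S N) * card N \<le> card (carrier S)"
proof -
  interpret N: normal N S by (rule nN)
  have finH: "finite H" using cardH card.infinite by fastforce
  have finS: "finite (carrier S)" using finV finH by (simp add: carrS)
  have cS: "card (carrier S) = card (carrier V) * card H" by (simp add: carrS card_cartesian_product)
  have V0: "0 < card (carrier V)" using finV V.one_closed card_gt_0_iff by blast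
  have fin1: "finite (carrier V \<times> {I})" using finV by simp
  have c1: "card (carrier V \<times> {I}) = card (carrier V)" by (simp add: card_cartesian_product)
  show strict: "card (centralizer S N) * card N < card (carrier S)" if nt: "N \<noteq> {\<one>\<^bsub>S\<^esub>}"
  proof -
    have "N \<subseteq> carrier V \<times> {I}"
    proof
      fix g assume g: "g \<in> N"
      then obtain v h where "g = (v, h)" by (cases g)
      with N_sub[OF nN ab] g N.subset show "g \<in> carrier V \<times> {I}" by (auto simp: carrS)
    qed
    then have "card N \<le> card (carrier V)" using card_mono[OF fin1] c1 by simp
    moreover have "card (centralizer S N) \<le> card (carrier V)"
      using C_sub[OF nN ab nt] card_mono[OF fin1] c1 by simp
    ultimately have "card (centralizer S N) * card N \<le> card (carrier V) * card (carrier V)"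
      by (simp add: mult_le_mono)
    also have "\<dots> < card (carrier V) * card H" using V0 cardH by simp
    finally show ?thesis using cS by simp
  qed
  show "card (centralizer S N) * card N \<le> card (carrier S)"
  proof (cases "N = {\<one>\<^bsub>S\<^esub>}")
    case True
    have "centralizer S N \<subseteq> carrier S" by (auto simp: centralizer_def)
    then show ?thesis using True card_mono[OF finS] by simp
  next
    case False then show ?thesis using strict by simp
  qed
qed

end

lemma centralizer_subgroup:
  fixes Gr :: "('g, 'c) monoid_scheme"
  assumes Gr: "group Gr" and Y: "Y \<subseteq> carrier Gr"
  shows "subgroup (centralizer Gr Y) Gr"
proof -
  interpret Gr: group Gr by (rule Gr)
  show ?thesis
  proof
    show "centralizer Gr Y \<subseteq> carrier Gr" by (auto simp: centralizer_def)
  next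
    fix g h assume g: "g \<in> centralizer Gr Y" and h: "h \<in> centralizer Gr Y"
    have gc: "g \<in> carrier Gr" and hc: "h \<in> carrier Gr" using g h by (auto simp: centralizer_def)
    have "g \<otimes>\<^bsub>Gr\<^esub> h \<otimes>\<^bsub>Gr\<^esub> a = a \<otimes>\<^bsub>Gr\<^esub> (g \<otimes>\<^bsub>Gr\<^esub> h)" if a: "a \<in> Y" for a
    proof -
      have ac: "a \<in> carrier Gr" using a Y by blast
      have "g \<otimes>\<^bsub>Gr\<^esub> h \<otimes>\<^bsub>Gr\<^esub> a = g \<otimes>\<^bsub>Gr\<^esub> (h \<otimes>\<^bsub>Gr\<^esub> a)" using gc hc ac by (simp add: Gr.m_assoc)
      also have "\<dots> = g \<otimes>\<^bsub>Gr\<^esub> (a \<otimes>\<^bsub>Gr\<^esub> h)" using h a by (simp add: centralizer_def)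
      also have "\<dots> = (g \<otimes>\<^bsub>Gr\<^esub> a) \<otimes>\<^bsub>Gr\<^esub> h" using gc hc ac by (simp add: Gr.m_assoc)
      also have "\<dots> = (a \<otimes>\<^bsub>Gr\<^esub> g) \<otimes>\<^bsub>Gr\<^esub> h" using g a by (simp add: centralizer_def)
      also have "\<dots> = a \<otimes>\<^bsub>Gr\<^esub> (g \<otimes>\<^bsub>Gr\<^esub> h)" using gc hc ac by (simp add: Gr.m_assoc)
      finally show ?thesis .
    qed
    then show "g \<otimes>\<^bsub>Gr\<^esub> h \<in> centralizer Gr Y" using gc hc by (simp add: centralizer_def)
  next
    show "\<one>\<^bsub>Gr\<^esub> \<in> centralizer Gr Y" using Y by (auto simp: centralizer_def)
  next
    fix g assume g: "g \<in> centralizer Gr Y"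
    have gc: "g \<in> carrier Gr" using g by (auto simp: centralizer_def)
    have "inv\<^bsub>Gr\<^esub> g \<otimes>\<^bsub>Gr\<^esub> a = a \<otimes>\<^bsub>Gr\<^esub> inv\<^bsub>Gr\<^esub> g" if a: "a \<in> Y" for a
    proof -
      have ac: "a \<in> carrier Gr" using a Y by blast
      have e: "g \<otimes>\<^bsub>Gr\<^esub> a = a \<otimes>\<^bsub>Gr\<^esub> g" using g a by (simp add: centralizer_def)
      have "inv\<^bsub>Gr\<^esub> g \<otimes>\<^bsub>Gr\<^esub> (a \<otimes>\<^bsub>Gr\<^esub> g) \<otimes>\<^bsub>Gr\<^esub> inv\<^bsub>Gr\<^esub> g
          = inv\<^bsub>Gr\<^esub> g \<otimes>\<^bsub>Gr\<^esub> (a \<otimes>\<^bsub>Gr\<^esub> (g \<otimes>\<^bsub>Gr\<^esub> inv\<^bsub>Gr\<^esub> g))"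
        using gc ac by (simp add: Gr.m_assoc)
      then have s1: "inv\<^bsub>Gr\<^esub> g \<otimes>\<^bsub>Gr\<^esub> a = inv\<^bsub>Gr\<^esub> g \<otimes>\<^bsub>Gr\<^esub> (a \<otimes>\<^bsub>Gr\<^esub> g) \<otimes>\<^bsub>Gr\<^esub> inv\<^bsub>Gr\<^esub> g"
        using gc ac by simp
      have s3: "inv\<^bsub>Gr\<^esub> g \<otimes>\<^bsub>Gr\<^esub> (g \<otimes>\<^bsub>Gr\<^esub> a) \<otimes>\<^bsub>Gr\<^esub> inv\<^bsub>Gr\<^esub> g = a \<otimes>\<^bsub>Gr\<^esub> inv\<^bsub>Gr\<^esub> g"
        by (metis Gr.inv_closed Gr.l_inv Gr.l_one Gr.m_assoc gc ac)
      show ?thesis using s1 s3 e by simp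
    qed
    then show "inv\<^bsub>Gr\<^esub> g \<in> centralizer Gr Y" using gc by (simp add: centralizer_def)
  qed
qed

lemma prod_lt:
  fixes f g :: "'i \<Rightarrow> nat"
  assumes "finite K" "j \<in> K" "\<And>i. i \<in> K \<Longrightarrow> f i \<le> g i" "f j < g j" "\<And>i. i \<in> K \<Longrightarrow> 0 < g i"
  shows "prod f K < prod g K"
proof -
  have "prod f K = f j * prod f (K - {j})" using assms by (simp add: prod.remove)
  also have "\<dots> \<le> f j * prod g (K - {j})" using assms by (intro mult_le_mono2 prod_mono) auto
  also have "\<dots> < g j * prod g (K - {j})"
    using assms by (simp add: prod_pos)
  also have "\<dots> = prod g K" using assms by (simp add: prod.remove)
  finally show ?thesis .
qed


theorem proposition1:
  fixes n :: nat
    and V :: "nat \<Rightarrow> ('a, 'b) monoid_scheme"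
    and H :: "nat \<Rightarrow> ('a \<Rightarrow> 'a) set"
  assumes "\<And>i. i < n \<Longrightarrow> type1_primitive_data (V i) (H i)"
    and "\<And>i. i < n \<Longrightarrow> card (H i) > card (carrier (V i))"
  shows "property_A (product_group {..<n} (\<lambda>i. semidirect (V i) (H i)))"
proof -
  define K where "K = {..<n}"
  define Sg where "Sg = (\<lambda>i. semidirect (V i) (H i))"
  define G where "G = product_group K Sg"
  have finK: "finite K" by (simp add: K_def)
  have t: "\<And>i. i \<in> K \<Longrightarrow> t1 (V i) (H i)" using assms(1) by (simp add: t1_def K_def)
  have cH: "\<And>i. i \<in> K \<Longrightarrow> card (carrier (V i)) < card (H i)" using assms(2) by (simp add: K_def)
  have grp: "\<And>i. i \<in> K \<Longrightarrow> group (Sg i)" using t t1.grpS Sg_def by metis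
  have finS: "finite (carrier (Sg i))" if i: "i \<in> K" for i
  proof -
    have "finite (H i)" using cH[OF i] card.infinite by fastforce
    moreover have "finite (carrier (V i))" using t1.finV[OF t[OF i]] .
    ultimately show ?thesis by (simp add: Sg_def semidirect_def)
  qed
  have pos: "0 < card (carrier (Sg i))" if i: "i \<in> K" for i
    using finS[OF i] monoid.one_closed[OF group.is_monoid[OF grp[OF i]]] card_gt_0_iff by blast
  have gG: "group G" unfolding G_def using grp by (rule product_group)
  have finG: "finite (carrier G)" unfolding G_def using finK finS by (simp add: finite_PiE)
  have ordG: "order G = (\<Prod>i\<in>K. card (carrier (Sg i)))"
    unfolding G_def order_def using finK by (simp add: card_PiE)
  have "property_A G"
    unfolding property_A_def
  proof (intro allI impI)
    fix A assume A: "A \<lhd> G \<and> (\<forall>x\<in>A. \<forall>y\<in>A. x \<otimes>\<^bsub>G\<^esub> y = y \<otimes>\<^bsub>G\<^esub> x) \<and> A \<noteq> {\<one>\<^bsub>G\<^esub>}"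
    then have nA: "A \<lhd> G" and abA: "\<forall>x\<in>A. \<forall>y\<in>A. x \<otimes>\<^bsub>G\<^esub> y = y \<otimes>\<^bsub>G\<^esub> x"
      and ntA: "A \<noteq> {\<one>\<^bsub>G\<^esub>}" by auto
    interpret AN: normal A G by (rule nA)
    have AG: "A \<subseteq> carrier G" by (rule AN.subset)
    define Pr where "Pr = (\<lambda>i. (\<lambda>f. f i) ` A)"
    define Cn where "Cn = centralizer G A"
    have nP: "Pr i \<lhd> Sg i" if i: "i \<in> K" for i
    proof -
      have hom: "group_hom G (Sg i) (\<lambda>f. f i)"
        unfolding group_hom_def group_hom_axioms_def
      proof (intro conjI gG grp[OF i])
        show "(\<lambda>f. f i) \<in> hom G (Sg i)"
          unfolding hom_def using i by (auto simp: G_def)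
      qed
      have surj: "(\<lambda>f. f i) ` carrier G = carrier (Sg i)"
      proof
        show "(\<lambda>f. f i) ` carrier G \<subseteq> carrier (Sg i)" using i by (auto simp: G_def)
        show "carrier (Sg i) \<subseteq> (\<lambda>f. f i) ` carrier G"
        proof
          fix x assume x: "x \<in> carrier (Sg i)"
          let ?e = "\<lambda>j\<in>K. if j = i then x else \<one>\<^bsub>Sg j\<^esub>"
          have "?e \<in> carrier G" using x grp by (auto simp: G_def monoid.one_closed group.is_monoid)
          moreover have "?e i = x" using i by simp
          ultimately show "x \<in> (\<lambda>f. f i) ` carrier G" by (metis (no_types, lifting) image_eqI)
        qed
      qed
      show ?thesis unfolding Pr_def by (rule AN.surj_hom_normal_subgroup[OF hom surj])
    qed
    have abP: "\<forall>x\<in>Pr i. \<forall>y\<in>Pr i. x \<otimes>\<^bsub>Sg i\<^esub> y = y \<otimes>\<^bsub>Sg i\<^esub> x" if i: "i \<in> K" for i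
    proof (intro ballI)
      fix x y assume "x \<in> Pr i" "y \<in> Pr i"
      then obtain f g where fg: "f \<in> A" "g \<in> A" "x = f i" "y = g i" by (auto simp: Pr_def)
      then have "(f \<otimes>\<^bsub>G\<^esub> g) i = (g \<otimes>\<^bsub>G\<^esub> f) i" using abA by simp
      then show "x \<otimes>\<^bsub>Sg i\<^esub> y = y \<otimes>\<^bsub>Sg i\<^esub> x" using fg i by (simp add: G_def)
    qed
    have fac: "card (centralizer (Sg i) (Pr i)) * card (Pr i) \<le> card (carrier (Sg i))" if i: "i \<in> K" for i
      unfolding Sg_def by (rule t1.factor(2)[OF t[OF i] nP[OF i, unfolded Sg_def] abP[OF i, unfolded Sg_def] cH[OF i]])
    have "\<exists>f\<in>A. f \<noteq> \<one>\<^bsub>G\<^esub>"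
    proof (rule ccontr)
      assume "\<not> (\<exists>f\<in>A. f \<noteq> \<one>\<^bsub>G\<^esub>)"
      then have "A \<subseteq> {\<one>\<^bsub>G\<^esub>}" by blast
      then have "A = {} \<or> A = {\<one>\<^bsub>G\<^esub>}" by (rule subset_singletonD)
      then show False using ntA subgroup.one_closed[OF normal_imp_subgroup[OF nA]] by (metis empty_iff)
    qed
    then obtain f where f: "f \<in> A" "f \<noteq> \<one>\<^bsub>G\<^esub>" by blast
    have fc: "f \<in> (\<Pi>\<^sub>E i\<in>K. carrier (Sg i))" using f AG by (auto simp: G_def)
    obtain j where j: "j \<in> K" "f j \<noteq> \<one>\<^bsub>Sg j\<^esub>"
    proof (rule ccontr)
      assume "\<not> thesis"
      then have "\<forall>j\<in>K. f j = \<one>\<^bsub>Sg j\<^esub>" using that by blast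
      then have "f = \<one>\<^bsub>G\<^esub>" using fc by (auto simp: G_def PiE_def extensional_def)
      then show False using f by simp
    qed
    have ntP: "Pr j \<noteq> {\<one>\<^bsub>Sg j\<^esub>}" using f j by (auto simp: Pr_def)
    have facj: "card (centralizer (Sg j) (Pr j)) * card (Pr j) < card (carrier (Sg j))"
      unfolding Sg_def by (rule t1.factor(1)[OF t[OF j(1)] nP[OF j(1), unfolded Sg_def] abP[OF j(1), unfolded Sg_def] cH[OF j(1)] ntP[unfolded Sg_def]])
    have Csub: "Cn \<subseteq> (\<Pi>\<^sub>E i\<in>K. centralizer (Sg i) (Pr i))"
    proof
      fix g assume g: "g \<in> Cn"
      then have gc: "g \<in> (\<Pi>\<^sub>E i\<in>K. carrier (Sg i))" by (auto simp: Cn_def centralizer_def G_def)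
      have "g i \<in> centralizer (Sg i) (Pr i)" if i: "i \<in> K" for i
      proof -
        have "g i \<otimes>\<^bsub>Sg i\<^esub> a = a \<otimes>\<^bsub>Sg i\<^esub> g i" if a: "a \<in> Pr i" for a
        proof -
          obtain h where h: "h \<in> A" "a = h i" using a by (auto simp: Pr_def)
          then have "(g \<otimes>\<^bsub>G\<^esub> h) i = (h \<otimes>\<^bsub>G\<^esub> g) i" using g by (auto simp: Cn_def centralizer_def)
          then show ?thesis using h i by (simp add: G_def)
        qed
        then show ?thesis using gc i by (auto simp: centralizer_def)
      qed
      then show "g \<in> (\<Pi>\<^sub>E i\<in>K. centralizer (Sg i) (Pr i))" using gc by (auto simp: PiE_def)
    qed
    have Asub: "A \<subseteq> (\<Pi>\<^sub>E i\<in>K. Pr i)"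
    proof
      fix g assume g: "g \<in> A"
      then have "g \<in> (\<Pi>\<^sub>E i\<in>K. carrier (Sg i))" using AG by (auto simp: G_def)
      then show "g \<in> (\<Pi>\<^sub>E i\<in>K. Pr i)" using g by (auto simp: PiE_def Pr_def)
    qed
    have finCi: "finite (centralizer (Sg i) (Pr i))" if "i \<in> K" for i
      using finS[OF that] by (rule rev_finite_subset) (auto simp: centralizer_def)
    have finA: "finite A" using finG AG finite_subset by blast
    have cardC: "card Cn \<le> (\<Prod>i\<in>K. card (centralizer (Sg i) (Pr i)))"
      using card_mono[OF finite_PiE[OF finK finCi] Csub] finK by (simp add: card_PiE)
    have cardA: "card A \<le> (\<Prod>i\<in>K. card (Pr i))"
      using card_mono[OF finite_PiE[OF finK] Asub] finK finA by (simp add: card_PiE Pr_def)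
    have "card Cn * card A \<le> (\<Prod>i\<in>K. card (centralizer (Sg i) (Pr i))) * (\<Prod>i\<in>K. card (Pr i))"
      using cardC cardA by (rule mult_le_mono)
    also have "\<dots> = (\<Prod>i\<in>K. card (centralizer (Sg i) (Pr i)) * card (Pr i))"
      by (simp add: prod.distrib)
    also have "\<dots> < (\<Prod>i\<in>K. card (carrier (Sg i)))"
      by (rule prod_lt[OF finK j(1)]) (use fac facj pos in auto)
    also have "\<dots> = order G" by (simp add: ordG)
    also have "\<dots> = card (rcosets\<^bsub>G\<^esub> Cn) * card Cn"
      using group.lagrange[OF gG centralizer_subgroup[OF gG AG]] by (simp add: Cn_def)
    finally have "card A * card Cn < card (rcosets\<^bsub>G\<^esub> Cn) * card Cn" by (simp add: mult.commute)
    then have "card A < card (rcosets\<^bsub>G\<^esub> Cn)" by simp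
    then show "card A < order (G Mod centralizer G A)"
      by (simp add: order_def FactGroup_def Cn_def)
  qed
  then show ?thesis by (simp add: G_def Sg_def K_def)
qed

end
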